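(* Let $\mathbb{X}=\langle X,\le\rangle$ be a poset such that ${\downarrow}x=\{y\in X: y\le x\}$ is cofinite in $X$ for every $x\in X$. Then the root compactification of $\mathbb{X}$ is an Esakia space.
   Context: The root compactification of a poset $\mathbb{X}$ is the ordered topological space obtained by adding a new element $\bot$ below all elements of $X$ (giving the poset $X\cup\{\bot\}$) and declaring a subset $U\subseteq X\cup\{\bot\}$ open iff either $\bot\notin U$ or $U$ is cofinite. An Esakia space is a compact ordered topological space $\langle X,\tau,\le\rangle$ such that ${\downarrow}U$ is clopen for every clopen $U$, and such that whenever $x\not\le y$ there is a clopen upset containing $x$ but not $y$. *)

theory Defs
  imports "HOL-Analysis.Analysis"
begin

definition poset_on :: "'a set \<Rightarrow> ('a \<Rightarrow> 'a \<Rightarrow> bool) \<Rightarrow> bool" where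
  "poset_on X le \<longleftrightarrow>
     (\<forall>x\<in>X. le x x) \<and>
     (\<forall>x\<in>X. \<forall>y\<in>X. le x y \<and> le y x \<longrightarrow> x = y) \<and>
     (\<forall>x\<in>X. \<forall>y\<in>X. \<forall>z\<in>X. le x y \<and> le y z \<longrightarrow> le x z)"

definition down_set :: "'a set \<Rightarrow> ('a \<Rightarrow> 'a \<Rightarrow> bool) \<Rightarrow> 'a set \<Rightarrow> 'a set" where
  "down_set X le U = {x \<in> X. \<exists>u\<in>U. le x u}"

definition is_upset :: "'a set \<Rightarrow> ('a \<Rightarrow> 'a \<Rightarrow> bool) \<Rightarrow> 'a set \<Rightarrow> bool" where
  "is_upset X le U \<longleftrightarrow> U \<subseteq> X \<and> (\<forall>u\<in>U. \<forall>x\<in>X. le u x \<longrightarrow> x \<in> U)"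

definition clopenin :: "'b topology \<Rightarrow> 'b set \<Rightarrow> bool" where
  "clopenin T U \<longleftrightarrow> openin T U \<and> closedin T U"

definition esakia_space :: "'b topology \<Rightarrow> ('b \<Rightarrow> 'b \<Rightarrow> bool) \<Rightarrow> bool" where
  "esakia_space T le \<longleftrightarrow>
     poset_on (topspace T) le \<and>
     compact_space T \<and>
     (\<forall>U. clopenin T U \<longrightarrow> clopenin T (down_set (topspace T) le U)) \<and>
     (\<forall>x\<in>topspace T. \<forall>y\<in>topspace T. \<not> le x y \<longrightarrow>
        (\<exists>U. clopenin T U \<and> is_upset (topspace T) le U \<and> x \<in> U \<and> y \<notin> U))"

text \<open>The new bottom element is represented by None; elements x of X by Some x.\<close>

definition root_carrier :: "'a set \<Rightarrow> 'a option set" where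
  "root_carrier X = insert None (Some ` X)"

fun root_le :: "('a \<Rightarrow> 'a \<Rightarrow> bool) \<Rightarrow> 'a option \<Rightarrow> 'a option \<Rightarrow> bool" where
  "root_le le None _ = True"
| "root_le le (Some x) None = False"
| "root_le le (Some x) (Some y) = le x y"

definition root_open :: "'a set \<Rightarrow> 'a option set \<Rightarrow> bool" where
  "root_open X U \<longleftrightarrow> U \<subseteq> root_carrier X \<and>
     (None \<notin> U \<or> finite (root_carrier X - U))"

lemma istopology_root_open: "istopology (root_open X)"
  unfolding istopology_def
proof (intro conjI allI impI)
  fix S T assume S: "root_open X S" and T: "root_open X T"
  have "root_carrier X - S \<inter> T = (root_carrier X - S) \<union> (root_carrier X - T)" by blast
  then show "root_open X (S \<inter> T)" using S T unfolding root_open_def by auto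
next
  fix K assume K: "\<forall>U\<in>K. root_open X U"
  show "root_open X (\<Union>K)"
  proof (cases "None \<in> \<Union>K")
    case True
    then obtain U where U: "U \<in> K" "None \<in> U" by blast
    then have "finite (root_carrier X - U)" using K unfolding root_open_def by auto
    moreover have "root_carrier X - \<Union>K \<subseteq> root_carrier X - U" using U by blast
    ultimately show ?thesis using K unfolding root_open_def by (auto intro: finite_subset)
  next
    case False
    then show ?thesis using K unfolding root_open_def by auto
  qed
qed

definition root_topology :: "'a set \<Rightarrow> 'a option topology" where
  "root_topology X = topology (root_open X)"

end

theory Submission
  imports Defs
begin

lemma rt_open: "openin (root_topology X) U \<longleftrightarrow> root_open X U"
  unfolding root_topology_def using istopology_root_open[of X]
  by (metis topology_inverse')

lemma rt_top: "topspace (root_topology X) = root_carrier X"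
proof
  have "root_open X (root_carrier X)" unfolding root_open_def by simp
  then show "root_carrier X \<subseteq> topspace (root_topology X)"
    by (simp add: openin_subset rt_open)
  show "topspace (root_topology X) \<subseteq> root_carrier X"
    unfolding topspace_def rt_open root_open_def by blast
qed

lemma rt_closed: "closedin (root_topology X) U \<longleftrightarrow> U \<subseteq> root_carrier X \<and> (None \<in> U \<or> finite U)"
proof -
  have e: "root_carrier X - (root_carrier X - U) = U" if "U \<subseteq> root_carrier X"
    using that by blast
  have n: "None \<in> root_carrier X" by (simp add: root_carrier_def)
  show ?thesis
    unfolding closedin_def rt_open rt_top root_open_def
  proof (cases "U \<subseteq> root_carrier X")
    case True
    then show "(U \<subseteq> root_carrier X \<and> root_carrier X - U \<subseteq> root_carrier X \<and>
     (None \<notin> root_carrier X - U \<or> finite (root_carrier X - (root_carrier X - U)))) =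
    (U \<subseteq> root_carrier X \<and> (None \<in> U \<or> finite U))" using e[OF True] n by simp
  qed simp
qed

lemma rt_clopen: "clopenin (root_topology X) U \<longleftrightarrow> U \<subseteq> root_carrier X \<and>
   ((None \<notin> U \<and> finite U) \<or> (None \<in> U \<and> finite (root_carrier X - U)))"
  unfolding clopenin_def rt_open root_open_def rt_closed by auto

lemma rt_po:
  assumes "poset_on X le"
  shows "poset_on (root_carrier X) (root_le le)"
proof -
  have R: "\<And>x. x \<in> X \<Longrightarrow> le x x"
   and A: "\<And>x y. x \<in> X \<Longrightarrow> y \<in> X \<Longrightarrow> le x y \<Longrightarrow> le y x \<Longrightarrow> x = y"
   and T: "\<And>x y z. x \<in> X \<Longrightarrow> y \<in> X \<Longrightarrow> z \<in> X \<Longrightarrow> le x y \<Longrightarrow> le y z \<Longrightarrow> le x z"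
    using assms unfolding poset_on_def by blast+
  have r: "root_le le x x" if "x \<in> root_carrier X" for x
    using that R unfolding root_carrier_def by (cases x) auto
  have a: "x = y" if H: "x \<in> root_carrier X" "y \<in> root_carrier X" "root_le le x y" "root_le le y x" for x y
  proof (cases x)
    case None
    then show ?thesis using that by (cases y) auto
  next
    case (Some a)
    then obtain b where b: "y = Some b" using H Some by (cases y) auto
    have "a \<in> X" "b \<in> X" using that Some b unfolding root_carrier_def by auto
    then show ?thesis using A[of a b] that Some b by simp
  qed
  have t: "root_le le x z" if H: "x \<in> root_carrier X" "y \<in> root_carrier X" "z \<in> root_carrier X"
      "root_le le x y" "root_le le y z" for x y z
  proof (cases x)
    case (Some a)
    then obtain b where b: "y = Some b" using H Some by (cases y) auto
    then obtain c where c: "z = Some c" using H by (cases z) auto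
    have "a \<in> X" "b \<in> X" "c \<in> X" using that Some b c unfolding root_carrier_def by auto
    then show ?thesis using T[of a b c] that Some b c by simp
  qed simp
  show ?thesis unfolding poset_on_def using r a t by blast
qed

lemma rt_compact: "compact_space (root_topology X)"
  unfolding compact_space_def compactin_def rt_top
proof (intro conjI allI impI)
  fix \<U> assume A: "(\<forall>B\<in>\<U>. openin (root_topology X) B) \<and> root_carrier X \<subseteq> \<Union>\<U>"
  then obtain B where B: "B \<in> \<U>" "None \<in> B" unfolding root_carrier_def by auto
  then have fB: "finite (root_carrier X - B)" using A by (auto simp: rt_open root_open_def)
  have "\<forall>x\<in>root_carrier X - B. \<exists>C\<in>\<U>. x \<in> C" using A by blast
  then obtain f where f: "\<forall>x\<in>root_carrier X - B. f x \<in> \<U> \<and> x \<in> f x" by metis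
  show "\<exists>\<F>. finite \<F> \<and> \<F> \<subseteq> \<U> \<and> root_carrier X \<subseteq> \<Union>\<F>"
  proof (intro exI conjI)
    show "finite (insert B (f ` (root_carrier X - B)))" using fB by simp
    show "insert B (f ` (root_carrier X - B)) \<subseteq> \<U>" using f B by blast
    show "root_carrier X \<subseteq> \<Union> (insert B (f ` (root_carrier X - B)))"
    proof
      fix x assume x: "x \<in> root_carrier X"
      show "x \<in> \<Union> (insert B (f ` (root_carrier X - B)))"
      proof (cases "x \<in> B")
        case False
        then have "x \<in> f x" "f x \<in> f ` (root_carrier X - B)" using f x by auto
        then show ?thesis by blast
      qed simp
    qed
  qed
qed simp

lemma rt_down:
  assumes po: "poset_on X le"
    and fin: "\<And>x. x \<in> X \<Longrightarrow> finite (X - {y \<in> X. le y x})"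
    and U: "clopenin (root_topology X) U"
  shows "clopenin (root_topology X) (down_set (root_carrier X) (root_le le) U)"
proof -
  let ?D = "down_set (root_carrier X) (root_le le) U"
  have Uc: "U \<subseteq> root_carrier X" using U rt_clopen by blast
  have refl: "\<And>u. u \<in> root_carrier X \<Longrightarrow> root_le le u u"
    using rt_po[OF po] unfolding poset_on_def by blast
  have sub: "U \<subseteq> ?D"
  proof
    fix u assume u: "u \<in> U"
    then have "u \<in> root_carrier X" using Uc by blast
    then show "u \<in> ?D" using u refl unfolding down_set_def by blast
  qed
  have Dc: "?D \<subseteq> root_carrier X" unfolding down_set_def by blast
  show ?thesis unfolding rt_clopen
  proof (cases "None \<in> U")
    case True
    then have "finite (root_carrier X - U)" using U rt_clopen by blast
    moreover have "root_carrier X - ?D \<subseteq> root_carrier X - U" using sub by blast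
    ultimately have "finite (root_carrier X - ?D)" by (rule finite_subset[rotated])
    then show "?D \<subseteq> root_carrier X \<and> (None \<notin> ?D \<and> finite ?D \<or> None \<in> ?D \<and> finite (root_carrier X - ?D))"
      using Dc sub True by blast
  next
    case False
    show "?D \<subseteq> root_carrier X \<and> (None \<notin> ?D \<and> finite ?D \<or> None \<in> ?D \<and> finite (root_carrier X - ?D))"
    proof (cases "U = {}")
      case True
      then have "?D = {}" unfolding down_set_def by blast
      then show ?thesis by simp
    next
      case ne: False
      then obtain u where u: "u \<in> U" by blast
      then obtain a where a: "u = Some a" "a \<in> X" using False Uc unfolding root_carrier_def by blast
      have NoneD: "None \<in> ?D" using u unfolding down_set_def root_carrier_def by force
      have "root_carrier X - ?D \<subseteq> Some ` (X - {y \<in> X. le y a})"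
      proof
        fix z assume z: "z \<in> root_carrier X - ?D"
        have zc: "z \<in> root_carrier X" "z \<noteq> None" using z NoneD by (metis DiffD1, metis DiffD2)
        then obtain b where b: "z = Some b" "b \<in> X" unfolding root_carrier_def by blast
        have "\<not> le b a" using z b u a unfolding down_set_def by force
        then show "z \<in> Some ` (X - {y \<in> X. le y a})" using b by blast
      qed
      moreover have "finite (Some ` (X - {y \<in> X. le y a}))" using fin[OF a(2)] by simp
      ultimately have "finite (root_carrier X - ?D)" by (rule finite_subset)
      then show ?thesis using Dc NoneD by blast
    qed
  qed
qed

lemma rt_sep:
  assumes po: "poset_on X le"
    and fin: "\<And>x. x \<in> X \<Longrightarrow> finite (X - {y \<in> X. le y x})"
    and x: "x \<in> root_carrier X" and y: "y \<in> root_carrier X" and nle: "\<not> root_le le x y"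
  shows "\<exists>U. clopenin (root_topology X) U \<and> is_upset (root_carrier X) (root_le le) U \<and> x \<in> U \<and> y \<notin> U"
proof -
  have R: "\<And>x. x \<in> X \<Longrightarrow> le x x"
   and A: "\<And>x y. x \<in> X \<Longrightarrow> y \<in> X \<Longrightarrow> le x y \<Longrightarrow> le y x \<Longrightarrow> x = y"
   and T: "\<And>x y z. x \<in> X \<Longrightarrow> y \<in> X \<Longrightarrow> z \<in> X \<Longrightarrow> le x y \<Longrightarrow> le y z \<Longrightarrow> le x z"
    using po unfolding poset_on_def by blast+
  obtain a where a: "x = Some a" "a \<in> X"
  proof (cases x)
    case None then show ?thesis using nle by simp
  next
    case (Some a) then show ?thesis using x that unfolding root_carrier_def by blast
  qed
  define U where "U = Some ` {z \<in> X. le a z}"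
  have "{z \<in> X. le a z} \<subseteq> insert a (X - {y \<in> X. le y a})"
  proof
    fix z assume z: "z \<in> {z \<in> X. le a z}"
    show "z \<in> insert a (X - {y \<in> X. le y a})"
    proof (cases "le z a")
      case True then have "z = a" using A[of z a] z a(2) by blast
      then show ?thesis by blast
    qed (use z in blast)
  qed
  then have finU: "finite {z \<in> X. le a z}" using fin[OF a(2)] finite_subset by blast
  have Uc: "U \<subseteq> root_carrier X" unfolding U_def root_carrier_def by blast
  have "clopenin (root_topology X) U" unfolding rt_clopen using Uc finU unfolding U_def by simp
  moreover have "is_upset (root_carrier X) (root_le le) U"
    unfolding is_upset_def
  proof (intro conjI ballI impI)
    show "U \<subseteq> root_carrier X" by (rule Uc)
  next
    fix u w assume u: "u \<in> U" and w: "w \<in> root_carrier X" and uw: "root_le le u w"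
    from u obtain c where c: "u = Some c" "c \<in> X" "le a c" unfolding U_def by blast
    then obtain d where d: "w = Some d" using uw by (cases w) auto
    have "d \<in> X" using w d unfolding root_carrier_def by blast
    moreover have "le c d" using uw c d by simp
    ultimately have "le a d" using T[of a c d] a(2) c by blast
    then show "w \<in> U" unfolding U_def using d \<open>d \<in> X\<close> by blast
  qed
  moreover have "x \<in> U" unfolding U_def using a R[OF a(2)] by blast
  moreover have "y \<notin> U"
  proof
    assume "y \<in> U"
    then obtain d where "y = Some d" "le a d" unfolding U_def by blast
    then show False using nle a by simp
  qed
  ultimately show ?thesis by blast
qed

theorem mainTheorem3:
  fixes X :: "'a set" and le :: "'a \<Rightarrow> 'a \<Rightarrow> bool"
  assumes "poset_on X le"
    and "\<And>x. x \<in> X \<Longrightarrow> finite (X - {y \<in> X. le y x})"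
  shows "esakia_space (root_topology X) (root_le le)"
  unfolding esakia_space_def rt_top
  using rt_po[OF assms(1)] rt_compact rt_down[OF assms] rt_sep[OF assms] by blast

end
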